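(* Let $X_1,X_2,\ldots$ be i.i.d. with density $g(x;\Psi_0,\sigma_0)$, $\Psi_0\in\boldsymbol{\Psi}_m$, $\sigma_0>0$, and assume Conditions C1–C4. Let $K_0=\int_{\mathbb{R}}\log\{g(x;\Psi_0,\sigma_0)\}\,g(x;\Psi_0,\sigma_0)\,dx$ (finite by C2), $\Delta=v_0/\exp(K_0-1)$, $a=(1+\beta)/(2\beta)$, $b=2(\beta+1)/(\beta-1)$, $\epsilon_0=(3mbv_0/\sigma_0)^{-1/(1-a)}$, and let $\epsilon>0$ satisfy (D1) $\epsilon\le\epsilon_0$; (D2) $\epsilon\le (v_1/v_0)^{-2/(\beta+1)}$; (D3) $b^{-1}\log v_0+(1-b^{-1})\log v_1+\tfrac14(\beta-1)\log\epsilon\le K_0-1$. Then, almost surely, $$\lim_{n\to\infty}\Big\{\sup_{\Psi\in\boldsymbol{\Psi}_m,\ \sigma\in[\Delta,\infty)}\ell_n(\Psi,\sigma)-\ell_n(\Psi_0,\sigma_0)\Big\}=-\infty$$ and $$\lim_{n\to\infty}\Big\{\sup_{\Psi\in\boldsymbol{\Psi}_m,\ \sigma\in(0,\epsilon]}\ell_n(\Psi,\sigma)-\ell_n(\Psi_0,\sigma_0)\Big\}=-\infty.$$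
   Context: Fix a positive integer $m$. Let $f(x;0,1)$ be a probability density on $\mathbb{R}$, $f(x;\mu,\sigma)=\sigma^{-1}f((x-\mu)/\sigma;0,1)$, $\boldsymbol{\Psi}_m=\{\sum_{j=1}^m\alpha_j I(\mu_j\le\mu):\alpha_j\ge0,\sum_j\alpha_j=1,\mu_j\in\mathbb{R}\}$, $g(x;\Psi,\sigma)=\sum_{j=1}^m\alpha_j f(x;\mu_j,\sigma)$, $\ell_n(\Psi,\sigma)=\sum_{i=1}^n\log g(X_i;\Psi,\sigma)$. Conditions: (C1) if $g(\cdot;\Psi_1,\sigma_1)=g(\cdot;\Psi_2,\sigma_2)$ everywhere ($\Psi_i\in\boldsymbol{\Psi}_m,\sigma_i>0$) then $\Psi_1=\Psi_2,\sigma_1=\sigma_2$. (C2) $\int|\log g(x;\Psi_0,\sigma_0)|g(x;\Psi_0,\sigma_0)dx<\infty$. (C3) There exist $v_0,v_1>0$, $\beta>1$ with $f(x;0,1)\le\min\{v_0,v_1|x|^{-\beta}\}$ for all $x$. (C4) $f(x;0,1)$ is continuous. The constants $v_0,v_1,\beta$ in the claim are those of C3. (Such an $\epsilon$ exists since $\beta>1$.) *)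

theory Defs
  imports "HOL-Probability.Probability"
begin

definition ls_dens :: "(real \<Rightarrow> real) \<Rightarrow> real \<Rightarrow> real \<Rightarrow> real \<Rightarrow> real" where
  "ls_dens f0 mu sg x = f0 ((x - mu) / sg) / sg"

text \<open>A mixing distribution in Psi_m is given by weights alpha j and support points mu j, j < m.\<close>
definition valid_mix :: "nat \<Rightarrow> (nat \<Rightarrow> real) \<Rightarrow> bool" where
  "valid_mix m alpha \<longleftrightarrow> (\<forall>j<m. alpha j \<ge> 0) \<and> (\<Sum>j<m. alpha j) = 1"

definition mix_cdf :: "nat \<Rightarrow> (nat \<Rightarrow> real) \<Rightarrow> (nat \<Rightarrow> real) \<Rightarrow> real \<Rightarrow> real" where
  "mix_cdf m alpha mus t = (\<Sum>j<m. alpha j * (if mus j \<le> t then 1 else 0))"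

definition mix_dens :: "(real \<Rightarrow> real) \<Rightarrow> nat \<Rightarrow> (nat \<Rightarrow> real) \<Rightarrow> (nat \<Rightarrow> real) \<Rightarrow> real \<Rightarrow> real \<Rightarrow> real" where
  "mix_dens f0 m alpha mus sg x = (\<Sum>j<m. alpha j * ls_dens f0 (mus j) sg x)"

definition eln :: "real \<Rightarrow> ereal" where
  "eln x = (if x > 0 then ereal (ln x) else -\<infinity>)"

definition loglik :: "(real \<Rightarrow> real) \<Rightarrow> nat \<Rightarrow> (nat \<Rightarrow> real) \<Rightarrow> (nat \<Rightarrow> real) \<Rightarrow> real
    \<Rightarrow> (nat \<Rightarrow> 'w \<Rightarrow> real) \<Rightarrow> nat \<Rightarrow> 'w \<Rightarrow> ereal" where
  "loglik f0 m alpha mus sg X n w = (\<Sum>i<n. eln (mix_dens f0 m alpha mus sg (X i w)))"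

definition cond_C1 :: "(real \<Rightarrow> real) \<Rightarrow> nat \<Rightarrow> bool" where
  "cond_C1 f0 m \<longleftrightarrow> (\<forall>a1 u1 s1 a2 u2 s2. valid_mix m a1 \<and> valid_mix m a2 \<and> s1 > 0 \<and> s2 > 0 \<and>
      (\<forall>x. mix_dens f0 m a1 u1 s1 x = mix_dens f0 m a2 u2 s2 x) \<longrightarrow>
      mix_cdf m a1 u1 = mix_cdf m a2 u2 \<and> s1 = s2)"

end

theory Submission
  imports Defs
begin
lemma chernoff_ae:
  fixes M :: "'w measure" and Y :: "nat \<Rightarrow> 'w \<Rightarrow> real"
  assumes PS: "prob_space M" and ind: "prob_space.indep_vars M (\<lambda>_. borel) Y UNIV"
    and l: "l > 0" and q: "q < exp (l * t)"
    and mgf: "\<And>i. (\<integral>\<^sup>+w. ennreal (exp (l * Y i w)) \<partial>M) \<le> ennreal q"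
  shows "AE w in M. eventually (\<lambda>n. (\<Sum>i<n. Y i w) < real n * t) sequentially"
proof -
  interpret prob_space M by (fact PS)
  have rv[measurable]: "\<And>i. Y i \<in> borel_measurable M"
    using ind unfolding indep_vars_def by auto
  define q' where "q' = max q 0"
  define r where "r = q' / exp (l * t)"
  have q'0: "q' \<ge> 0" by (simp add: q'_def)
  have r0: "r \<ge> 0" and r1: "r < 1" using q by (auto simp: r_def q'_def)
  define A where "A n = {w \<in> space M. real n * t \<le> (\<Sum>i<n. Y i w)}" for n
  have Ameas[measurable]: "A n \<in> sets M" for n unfolding A_def by measurable
  have bound: "emeasure M (A n) \<le> ennreal (r ^ n)" for n
  proof -
    have "emeasure M (A n) = emeasure M {w \<in> space M. (\<Sum>i<n. Y i w) \<ge> real n * t}"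
      unfolding A_def by simp
    also have "\<dots> \<le> ennreal (exp (- l * (real n * t))) *
        (\<integral>\<^sup>+w. ennreal (exp (l * (\<Sum>i<n. Y i w))) * indicator (space M) w \<partial>M)"
      by (intro Chernoff_ineq_nn_integral_ge l) auto
    also have "(\<integral>\<^sup>+w. ennreal (exp (l * (\<Sum>i<n. Y i w))) * indicator (space M) w \<partial>M)
        = (\<integral>\<^sup>+w. (\<Prod>i<n. ennreal (exp (l * Y i w))) \<partial>M)"
      by (intro nn_integral_cong)
         (simp add: sum_distrib_left exp_sum prod_ennreal)
    also have "\<dots> = (\<Prod>i<n. \<integral>\<^sup>+w. ennreal (exp (l * Y i w)) \<partial>M)"
      by (intro indep_vars_nn_integral indep_vars_compose2[OF indep_vars_subset[OF ind]]) auto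
    also have "\<dots> \<le> (\<Prod>i<n. ennreal q')"
      by (intro prod_mono_ennreal order_trans[OF mgf]) (auto simp: q'_def)
    also have "\<dots> = ennreal (q' ^ n)"
      using q'0 by (simp add: ennreal_power)
    also have "ennreal (exp (- l * (real n * t))) * ennreal (q' ^ n) = ennreal (r ^ n)"
    proof -
      have "exp (- l * (real n * t)) * q' ^ n = (q' / exp (l * t)) ^ n"
        by (simp add: power_divide exp_of_nat_mult[symmetric] exp_minus field_simps)
      then show ?thesis using q'0 by (simp add: r_def ennreal_mult[symmetric] del: ennreal_mult' power_divide)
    qed
    finally show ?thesis by (meson mult_left_mono zero_le)
  qed
  have mb: "measure M (A n) \<le> r ^ n" for n
    using bound[of n] r0 by (simp add: emeasure_eq_measure ennreal_le_iff)
  have "summable (\<lambda>n. measure M (A n))"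
    by (rule summable_comparison_test[OF _ summable_geometric[of r]])
       (use mb r0 r1 in auto)
  then have "AE w in M. eventually (\<lambda>n. w \<in> space M - A n) sequentially"
    by (intro borel_cantelli_AE1) (auto simp: emeasure_eq_measure)
  then show ?thesis
    by (rule AE_mp) (auto intro!: AE_I2 elim!: eventually_mono simp: A_def not_le)
qed

lemma bounded_upper_ae:
  fixes M :: "'w measure" and X :: "nat \<Rightarrow> 'w \<Rightarrow> real" and \<psi> :: "real \<Rightarrow> real"
  assumes PS: "prob_space M" and ind: "prob_space.indep_vars M (\<lambda>_. borel) X UNIV"
    and psi[measurable]: "\<psi> \<in> borel_measurable borel"
    and bnd: "\<And>x. lo \<le> \<psi> x \<and> \<psi> x \<le> hi"
    and E: "\<And>i. prob_space.expectation M (\<lambda>w. \<psi> (X i w)) \<le> c" and eta: "\<eta> > 0"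
  shows "AE w in M. eventually (\<lambda>n. (\<Sum>i<n. \<psi> (X i w)) < real n * (c + \<eta>)) sequentially"
proof -
  interpret prob_space M by (fact PS)
  have rv[measurable]: "\<And>i. X i \<in> borel_measurable M"
    using ind unfolding indep_vars_def by auto
  define d where "d = (hi - lo)\<^sup>2"
  have d0: "d \<ge> 0" by (simp add: d_def)
  define l where "l = \<eta> / (d + 1)"
  have l0: "l > 0" using eta d0 by (simp add: l_def)
  have ld: "l * d < \<eta>" using eta d0 by (simp add: l_def field_simps)
  have lq: "exp (l * c + l\<^sup>2 * d / 8) < exp (l * (c + \<eta>))"
  proof -
    have "l\<^sup>2 * d / 8 < l * \<eta>" using ld l0 eta
      by (simp add: power2_eq_square field_simps)
    then show ?thesis by (simp add: algebra_simps)
  qed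
  show ?thesis
  proof (rule chernoff_ae[OF PS _ l0 lq])
    show "indep_vars (\<lambda>_. borel) (\<lambda>i w. \<psi> (X i w)) UNIV"
      by (rule indep_vars_compose2[OF ind]) auto
    fix i
    interpret B: interval_bounded_random_variable M "\<lambda>w. \<psi> (X i w)" lo hi
      by unfold_locales (auto simp: bnd)
    define e where "e = expectation (\<lambda>w. \<psi> (X i w))"
    have "(\<integral>\<^sup>+w. ennreal (exp (l * \<psi> (X i w))) \<partial>M)
        = (\<integral>\<^sup>+w. ennreal (exp (l * e)) * ennreal (exp (l * (\<psi> (X i w) - e))) \<partial>M)"
      by (intro nn_integral_cong) (simp add: ennreal_mult[symmetric] exp_add[symmetric] algebra_simps)
    also have "\<dots> = ennreal (exp (l * e)) * (\<integral>\<^sup>+w. ennreal (exp (l * (\<psi> (X i w) - e))) \<partial>M)"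
      by (rule nn_integral_cmult) auto
    also have "\<dots> \<le> ennreal (exp (l * e)) * ennreal (exp (l\<^sup>2 * (hi - lo)\<^sup>2 / 8))"
      by (intro mult_left_mono) (use B.Hoeffdings_lemma_nn_integral[OF l0] in \<open>auto simp: e_def\<close>)
    also have "\<dots> = ennreal (exp (l * e + l\<^sup>2 * d / 8))"
      by (simp add: ennreal_mult[symmetric] exp_add d_def)
    also have "\<dots> \<le> ennreal (exp (l * c + l\<^sup>2 * d / 8))"
      using E[of i] l0 by (intro ennreal_leI) (simp add: e_def)
    finally show "(\<integral>\<^sup>+w. ennreal (exp (l * \<psi> (X i w))) \<partial>M) \<le> ennreal (exp (l * c + l\<^sup>2 * d / 8))" .
  qed
qed

lemma ls_dens_le_v0:
  assumes "\<forall>x. f0 x \<le> v0" "s > 0"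
  shows "ls_dens f0 mu s x \<le> v0 / s"
  using assms by (simp add: ls_dens_def divide_right_mono)

lemma ls_dens_nonneg:
  assumes "\<forall>x. f0 x \<ge> 0" "s > 0"
  shows "ls_dens f0 mu s x \<ge> 0"
  using assms by (simp add: ls_dens_def)

lemma ls_dens_tail:
  assumes C: "\<forall>x. x \<noteq> 0 \<longrightarrow> f0 x \<le> v1 * \<bar>x\<bar> powr (- beta)" and s: "s > 0"
    and rho: "rho > 0" "\<bar>x - mu\<bar> \<ge> rho" and v1: "v1 > 0" and beta: "beta > 0"
  shows "ls_dens f0 mu s x \<le> v1 * s powr (beta - 1) * rho powr (- beta)"
proof -
  have ne: "(x - mu) / s \<noteq> 0" using rho s by auto
  have "ls_dens f0 mu s x = f0 ((x - mu) / s) / s" by (simp add: ls_dens_def)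
  also have "\<dots> \<le> v1 * \<bar>(x - mu) / s\<bar> powr (- beta) / s"
    using C[rule_format, OF ne] s by (intro divide_right_mono) auto
  also have "\<bar>(x - mu) / s\<bar> powr (- beta) = \<bar>x - mu\<bar> powr (- beta) * s powr beta"
    using s by (simp add: abs_divide powr_divide powr_minus field_simps)
  also have "\<bar>x - mu\<bar> powr (- beta) \<le> rho powr (- beta)"
    using rho beta by (intro powr_mono2') auto
  then have "v1 * (\<bar>x - mu\<bar> powr (- beta) * s powr beta) / s \<le> v1 * (rho powr (- beta) * s powr beta) / s"
    using s v1 by (intro divide_right_mono mult_left_mono mult_right_mono) auto
  also have "v1 * (rho powr (- beta) * s powr beta) / s = v1 * s powr (beta - 1) * rho powr (- beta)"
    using s by (simp add: powr_diff)
  finally show ?thesis by simp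
qed

lemma mix_dens_nonneg:
  assumes "\<forall>x. f0 x \<ge> 0" "s > 0" "valid_mix m al"
  shows "mix_dens f0 m al mu s x \<ge> 0"
  using assms unfolding mix_dens_def valid_mix_def
  by (intro sum_nonneg) (simp add: ls_dens_nonneg)

lemma mix_dens_bound:
  assumes va: "valid_mix m al" and H: "\<And>j. j < m \<Longrightarrow> ls_dens f0 (mu j) s x \<le> B"
  shows "mix_dens f0 m al mu s x \<le> B"
proof -
  have "mix_dens f0 m al mu s x \<le> (\<Sum>j<m. al j * B)"
    unfolding mix_dens_def using va H
    by (intro sum_mono mult_left_mono) (auto simp: valid_mix_def)
  also have "\<dots> = B" using va by (simp add: valid_mix_def sum_distrib_right[symmetric])
  finally show ?thesis .
qed

lemma eln_le: "y \<le> u \<Longrightarrow> u > 0 \<Longrightarrow> eln y \<le> ereal (ln u)"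
  by (auto simp: eln_def)

lemma sum_eln_le:
  assumes "\<And>i. i < n \<Longrightarrow> eln (y i) \<le> ereal (c i)"
  shows "(\<Sum>i<n. eln (y i)) \<le> ereal (\<Sum>i<n. c i)"
proof -
  have "(\<Sum>i<n. eln (y i)) \<le> (\<Sum>i<n. ereal (c i))"
    using assms by (intro sum_mono) auto
  also have "\<dots> = ereal (\<Sum>i<n. c i)" by simp
  finally show ?thesis .
qed

lemma big_sigma_bound:
  assumes f0v0: "\<forall>x. f0 x \<le> v0" and v0: "v0 > 0" and va: "valid_mix m al" and D: "Delta > 0" "s \<ge> Delta"
    and K: "v0 / Delta \<le> exp K"
  shows "(\<Sum>i<n. eln (mix_dens f0 m al mu s (x i))) \<le> ereal (real n * K)"
proof -
  have "(\<Sum>i<n. eln (mix_dens f0 m al mu s (x i))) \<le> ereal (\<Sum>i<n. K)"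
  proof (rule sum_eln_le)
    fix i
    have "mix_dens f0 m al mu s (x i) \<le> v0 / s"
      using D f0v0 by (intro mix_dens_bound[OF va] ls_dens_le_v0) auto
    also have "v0 / s \<le> v0 / Delta"
      using D v0 by (intro divide_left_mono) auto
    finally have "mix_dens f0 m al mu s (x i) \<le> exp K" using K by linarith
    then show "eln (mix_dens f0 m al mu s (x i)) \<le> ereal K"
      using eln_le[of _ "exp K"] by simp
  qed
  then show ?thesis by simp
qed

lemma small_sigma_bound:
  fixes x :: "nat \<Rightarrow> real"
  assumes f0b: "\<forall>x. f0 x \<le> v0 \<and> (x \<noteq> 0 \<longrightarrow> f0 x \<le> v1 * \<bar>x\<bar> powr (- beta))"
    and v0: "v0 > 0" and v1: "v1 > 0" and beta: "beta > 1"
    and va: "valid_mix m al" and s: "s > 0"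
    and a_def: "a = (1 + beta) / (2 * beta)" and b_def: "b = 2 * (beta + 1) / (beta - 1)"
    and AB: "ln v1 + (beta - 1) / 2 * ln s \<le> ln v0 - ln s"
    and cnt: "(\<Sum>i<n. if (\<exists>j<m. \<bar>x i - mu j\<bar> < s powr (1 - a)) then 1 else 0) \<le> real n / b"
  shows "(\<Sum>i<n. eln (mix_dens f0 m al mu s (x i)))
          \<le> ereal (real n * (ln v0 / b + (1 - 1 / b) * ln v1 + (beta - 1) / 4 * ln s))"
proof -
  define A where "A = ln v0 - ln s"
  define B where "B = ln v1 + (beta - 1) / 2 * ln s"
  define P where "P i = (\<exists>j<m. \<bar>x i - mu j\<bar> < s powr (1 - a))" for i
  define N where "N = (\<Sum>i<n. if P i then 1 else 0 :: real)"
  have N: "N \<le> real n / b" using cnt by (simp add: N_def P_def)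
  have b0: "b > 0" using beta by (simp add: b_def)
  have "(\<Sum>i<n. eln (mix_dens f0 m al mu s (x i))) \<le> ereal (\<Sum>i<n. if P i then A else B)"
  proof (rule sum_eln_le)
    fix i
    show "eln (mix_dens f0 m al mu s (x i)) \<le> ereal (if P i then A else B)"
    proof (cases "P i")
      case True
      have "mix_dens f0 m al mu s (x i) \<le> v0 / s"
        using s f0b by (intro mix_dens_bound[OF va] ls_dens_le_v0) auto
      then have "eln (mix_dens f0 m al mu s (x i)) \<le> ereal (ln (v0 / s))"
        using v0 s by (intro eln_le) auto
      then show ?thesis using True v0 s by (simp add: A_def ln_div)
    next
      case False
      define rho where "rho = s powr (1 - a)"
      have rho: "rho > 0" using s by (simp add: rho_def)
      have "ls_dens f0 (mu j) s (x i) \<le> v1 * s powr (beta - 1) * rho powr (- beta)" if "j < m" for j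
        using False that rho s v1 beta f0b
        by (intro ls_dens_tail) (auto simp: P_def rho_def not_less dest: spec[of _ j])
      then have "mix_dens f0 m al mu s (x i) \<le> v1 * s powr (beta - 1) * rho powr (- beta)"
        by (intro mix_dens_bound[OF va])
      also have "v1 * s powr (beta - 1) * rho powr (- beta) = v1 * s powr ((beta - 1) / 2)"
      proof -
        have "s powr (beta - 1) * rho powr (- beta) = s powr ((beta - 1) + (1 - a) * (- beta))"
          using s by (simp add: rho_def powr_powr powr_add[symmetric])
        also have "(beta - 1) + (1 - a) * (- beta) = (beta - 1) / 2"
          using beta by (simp add: a_def field_simps)
        finally show ?thesis by simp
      qed
      finally have "eln (mix_dens f0 m al mu s (x i)) \<le> ereal (ln (v1 * s powr ((beta - 1) / 2)))"
        using v1 s by (intro eln_le) auto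
      then show ?thesis using False v1 s by (simp add: B_def ln_mult ln_powr)
    qed
  qed
  also have "(\<Sum>i<n. if P i then A else B) = real n * B + (A - B) * N"
  proof -
    have "(\<Sum>i<n. if P i then A else B) = (\<Sum>i<n. B + (A - B) * (if P i then 1 else 0))"
      by (intro sum.cong) auto
    also have "\<dots> = real n * B + (A - B) * N"
      by (simp add: sum.distrib N_def sum_distrib_left)
    finally show ?thesis .
  qed
  also have "real n * B + (A - B) * N \<le> real n * B + (A - B) * (real n / b)"
    using AB N by (intro add_left_mono mult_left_mono) (auto simp: A_def B_def)
  also have "real n * B + (A - B) * (real n / b)
      = real n * (ln v0 / b + (1 - 1 / b) * ln v1 + (beta - 1) / 4 * ln s)"
  proof -
    have ib: "1/b = (beta-1)/(2*(beta+1))" by (simp add: b_def)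
    have "- ((beta-1)/(2*(beta+1))) + (1 - (beta-1)/(2*(beta+1))) * ((beta-1)/2) = (beta-1)/4"
    proof -
      define u where "u = beta + 1"
      have u: "u > 0" using beta by (simp add: u_def)
      have bu: "beta = u - 1" by (simp add: u_def)
      have "- ((u-2)/(2*u)) + (1 - (u-2)/(2*u)) * ((u-2)/2) = (u-2)/4"
        using u by (simp add: field_simps)
      then show ?thesis by (simp add: bu algebra_simps)
    qed
    then have coef: "- (1/b) + (1 - 1/b) * ((beta-1)/2) = (beta-1)/4" by (simp only: ib)
    show ?thesis unfolding coef[symmetric] using b0 by (simp add: A_def B_def field_simps)
  qed
  finally show ?thesis by simp
qed

locale iid_dens = prob_space M for M :: "'w measure" +
  fixes X :: "nat \<Rightarrow> 'w \<Rightarrow> real" and g :: "real \<Rightarrow> real"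
  assumes ind: "indep_vars (\<lambda>_. borel) X UNIV"
    and distr: "\<And>i. distributed M lborel (X i) (\<lambda>x. ennreal (g x))"
    and g_nonneg: "\<And>x. g x \<ge> 0"
begin

lemma rv[measurable]: "X i \<in> borel_measurable M"
  using ind unfolding indep_vars_def by auto

lemma g_meas[measurable]: "g \<in> borel_measurable borel"
  using distributed_real_measurable[OF _ distr[of 0]] g_nonneg by auto

lemma expect_eq:
  assumes [measurable]: "\<psi> \<in> borel_measurable borel"
  shows "expectation (\<lambda>w. \<psi> (X i w)) = (\<integral>x. g x * \<psi> x \<partial>lborel)"
  using distributed_integral[OF distr[of i], of \<psi>] g_nonneg by simp

lemma nn_eq:
  assumes [measurable]: "\<phi> \<in> borel_measurable borel"
  shows "(\<integral>\<^sup>+w. \<phi> (X i w) \<partial>M) = (\<integral>\<^sup>+x. ennreal (g x) * \<phi> x \<partial>lborel)"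
  using distributed_nn_integral[OF distr[of i], of \<phi>] by simp

lemma g_nn_integral: "(\<integral>\<^sup>+x. ennreal (g x) \<partial>lborel) = 1"
  using nn_eq[of "\<lambda>_. 1" 0] by (simp add: emeasure_space_1)

lemma g_integrable: "integrable lborel g"
  using g_nn_integral g_nonneg by (intro integrableI_nonneg) (auto simp: less_top[symmetric])

lemma count_upper:
  assumes [measurable]: "S \<in> sets borel" and p: "(\<integral>x. g x * indicator S x \<partial>lborel) \<le> p"
    and eta: "\<eta> > 0"
  shows "AE w in M. eventually (\<lambda>n. (\<Sum>i<n. indicator S (X i w)) < real n * (p + \<eta>)) sequentially"
proof -
  have m: "indicator S \<in> borel_measurable borel" by measurable
  have E: "expectation (\<lambda>w. indicator S (X i w)) \<le> p" for i
    using p expect_eq[OF m, of i] by linarith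
  show ?thesis
    by (rule bounded_upper_ae[OF prob_space_axioms ind m _ E eta, of 0 1]) (auto simp: indicator_def)
qed

lemma AE_pos: "AE w in M. \<forall>i. g (X i w) > 0"
proof (subst AE_all_countable, intro allI)
  fix i
  have "emeasure M (X i -` {x. g x \<le> 0} \<inter> space M) = (\<integral>\<^sup>+x. ennreal (g x) * indicator {x. g x \<le> 0} x \<partial>lborel)"
    by (rule distributed_emeasure[OF distr]) measurable
  also have "\<dots> = (\<integral>\<^sup>+(x::real). 0 \<partial>lborel)"
    by (intro nn_integral_cong) (auto simp: indicator_def antisym g_nonneg)
  finally have "emeasure M (X i -` {x. g x \<le> 0} \<inter> space M) = 0" by simp
  then show "AE w in M. g (X i w) > 0"
    by (subst AE_iff_measurable[OF _ refl]) (auto simp: not_less Int_def vimage_def conj_commute)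
qed

lemma loglik_lower:
  assumes c0: "\<And>x. g x \<le> c0" "c0 > 0"
    and a: "0 < a" "a < 1"
    and I1: "(\<integral>\<^sup>+x. ennreal (g x powr a) \<partial>lborel) < \<infinity>"
    and Kint: "integrable lborel (\<lambda>x. ln (g x) * g x)"
    and eta: "\<eta> > 0"
  shows "AE w in M. eventually (\<lambda>n. (\<Sum>i<n. ln (g (X i w)))
            > real n * ((\<integral>x. ln (g x) * g x \<partial>lborel) - 2 * \<eta>)) sequentially"
proof -
  define K where "K = (\<integral>x. ln (g x) * g x \<partial>lborel)"
  define l where "l = (1 - a) / 2"
  have l0: "l > 0" using a by (simp add: l_def)
  have al: "a = 1 - 2 * l" by (simp add: l_def field_simps)
  define I where "I = enn2real (\<integral>\<^sup>+x. ennreal (g x powr a) \<partial>lborel)"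
  have I0: "I \<ge> 0" by (simp add: I_def)
  have Ieq: "(\<integral>\<^sup>+x. ennreal (g x powr a) \<partial>lborel) = ennreal I"
    using I1 by (simp add: I_def ennreal_enn2real_if less_top)
  define \<delta> where "\<delta> = exp (l * \<eta>) - 1"
  have \<delta>0: "\<delta> > 0" using l0 eta by (simp add: \<delta>_def)
  define T where "T = I / (\<delta> * l)"
  have T0: "T \<ge> 0" using I0 \<delta>0 l0 by (simp add: T_def)
  have small: "exp (- (l * T)) * I < \<delta>"
  proof -
    have e: "1 + l * T \<le> exp (l * T)" by (rule exp_ge_add_one_self)
    have "exp (- (l * T)) * I = I / exp (l * T)" by (simp add: exp_minus field_simps)
    also have "\<dots> \<le> I / (1 + l * T)"
    proof -
      have "0 < 1 + l * T" using T0 l0 by (simp add: add_pos_nonneg)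
      then show ?thesis using e I0 by (intro divide_left_mono) (auto intro: mult_pos_pos)
    qed
    also have "1 + l * T = (\<delta> + I) / \<delta>" using \<delta>0 l0 by (simp add: T_def field_simps)
    also have "I / ((\<delta> + I) / \<delta>) = I * \<delta> / (\<delta> + I)" by simp
    also have "\<dots> < \<delta>" using \<delta>0 I0 by (simp add: field_simps)
    finally show ?thesis .
  qed
  define q where "q = 1 + exp (- (l * T)) * I"
  have q: "q < exp (l * \<eta>)" using small by (simp add: q_def \<delta>_def)
  define W where "W x = max (ln (g x)) (- T)" for x
  define D where "D x = max (- T - ln (g x)) 0" for x
  have WD: "ln (g x) = W x - D x" for x by (simp add: W_def D_def max_def)
  have [measurable]: "W \<in> borel_measurable borel" "D \<in> borel_measurable borel"
    unfolding W_def D_def by measurable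
  have Wb: "- \<bar>ln c0\<bar> \<le> - W x \<and> - W x \<le> T" for x
  proof -
    have "ln (g x) \<le> \<bar>ln c0\<bar>"
    proof (cases "g x > 0")
      case True then show ?thesis using c0(1)[of x] c0(2) by (smt (verit) ln_le_cancel_iff)
    next
      case False then have "g x = 0" using g_nonneg[of x] by simp
      then show ?thesis by simp
    qed
    then show ?thesis using T0 by (auto simp: W_def)
  qed
  have intW: "integrable lborel (\<lambda>x. g x * W x)"
  proof (rule Bochner_Integration.integrable_bound)
    show "integrable lborel (\<lambda>x. g x * (\<bar>ln c0\<bar> + T))"
      using g_integrable by simp
    show "AE x in lborel. norm (g x * W x) \<le> norm (g x * (\<bar>ln c0\<bar> + T))"
    proof (intro AE_I2)
      fix x
      have z: "0 \<le> \<bar>ln c0\<bar>" by simp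
      have "\<bar>W x\<bar> \<le> \<bar>ln c0\<bar> + T" unfolding abs_le_iff using Wb[of x] T0 z by linarith
      then show "norm (g x * W x) \<le> norm (g x * (\<bar>ln c0\<bar> + T))"
        using g_nonneg[of x] T0 by (simp add: abs_mult mult_left_mono)
    qed
  qed simp
  have EW: "expectation (\<lambda>w. - W (X i w)) \<le> - K" for i
  proof -
    have "expectation (\<lambda>w. - W (X i w)) = (\<integral>x. g x * - W x \<partial>lborel)"
      by (rule expect_eq) measurable
    also have "\<dots> = - (\<integral>x. g x * W x \<partial>lborel)" by simp
    also have "(\<integral>x. ln (g x) * g x \<partial>lborel) \<le> (\<integral>x. g x * W x \<partial>lborel)"
      using Kint intW g_nonneg by (intro integral_mono) (auto simp: W_def mult.commute intro!: mult_left_mono)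
    then have "- (\<integral>x. g x * W x \<partial>lborel) \<le> - K" by (simp add: K_def)
    finally show ?thesis .
  qed
  have AEa: "AE w in M. eventually (\<lambda>n. (\<Sum>i<n. - W (X i w)) < real n * (- K + \<eta>)) sequentially"
    by (rule bounded_upper_ae[OF prob_space_axioms ind _ Wb EW eta]) measurable
  have AEb: "AE w in M. eventually (\<lambda>n. (\<Sum>i<n. D (X i w)) < real n * \<eta>) sequentially"
  proof (rule chernoff_ae[OF prob_space_axioms _ l0 q])
    show "indep_vars (\<lambda>_. borel) (\<lambda>i w. D (X i w)) UNIV"
      by (rule indep_vars_compose2[OF ind]) auto
    fix i
    have pt: "ennreal (g x) * ennreal (exp (l * D x)) \<le> ennreal (g x) + ennreal (exp (- (l * T))) * ennreal (g x powr a)" for x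
    proof -
      have "g x * exp (l * D x) \<le> g x + exp (- (l * T)) * g x powr a"
      proof (cases "g x > 0")
        case False then have "g x = 0" using g_nonneg[of x] by simp
        then show ?thesis by simp
      next
        case gp: True
        define z where "z = ln (g x)"
        have gz: "g x = exp z" using gp by (simp add: z_def)
        show ?thesis
        proof (cases "z \<ge> - T")
          case True then have "D x = 0" by (simp add: D_def z_def)
          then show ?thesis by simp
        next
          case False
          then have Dx: "D x = - T - z" by (simp add: D_def z_def)
          have "g x * exp (l * D x) = exp (z - l * T - l * z)"
            by (simp add: gz Dx exp_add[symmetric] algebra_simps)
          also have "\<dots> \<le> exp (- (l * T) + a * z)"
            using False T0 l0 by (simp add: al algebra_simps mult_nonneg_nonpos) 
          also have "\<dots> = exp (- (l * T)) * g x powr a"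
            using gp by (simp add: powr_def z_def exp_add[symmetric] mult.commute)
          finally show ?thesis using g_nonneg[of x] by simp
        qed
      qed
      then show ?thesis using g_nonneg[of x]
        by (simp add: ennreal_mult[symmetric] ennreal_plus[symmetric] del: ennreal_plus)
    qed
    have "(\<integral>\<^sup>+w. ennreal (exp (l * D (X i w))) \<partial>M) = (\<integral>\<^sup>+x. ennreal (g x) * ennreal (exp (l * D x)) \<partial>lborel)"
      by (rule nn_eq) measurable
    also have "\<dots> \<le> (\<integral>\<^sup>+x. ennreal (g x) + ennreal (exp (- (l * T))) * ennreal (g x powr a) \<partial>lborel)"
      by (intro nn_integral_mono pt)
    also have "\<dots> = (\<integral>\<^sup>+x. ennreal (g x) \<partial>lborel) + ennreal (exp (- (l * T))) * (\<integral>\<^sup>+x. ennreal (g x powr a) \<partial>lborel)"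
      by (subst nn_integral_add) (auto simp: nn_integral_cmult)
    also have "\<dots> = ennreal q"
      using I0 by (simp add: g_nn_integral Ieq q_def ennreal_mult[symmetric] ennreal_plus[symmetric] del: ennreal_plus)
        (metis ennreal_1 ennreal_plus mult_nonneg_nonneg exp_ge_zero zero_le_one)
    finally show "(\<integral>\<^sup>+w. ennreal (exp (l * D (X i w))) \<partial>M) \<le> ennreal q" .
  qed
  show ?thesis
  proof (rule AE_mp[OF AE_conjI[OF AEa AEb]], intro AE_I2 impI, elim conjE)
    fix w
    assume A: "eventually (\<lambda>n. (\<Sum>i<n. - W (X i w)) < real n * (- K + \<eta>)) sequentially"
      and B: "eventually (\<lambda>n. (\<Sum>i<n. D (X i w)) < real n * \<eta>) sequentially"
    show "eventually (\<lambda>n. (\<Sum>i<n. ln (g (X i w))) > real n * ((\<integral>x. ln (g x) * g x \<partial>lborel) - 2 * \<eta>)) sequentially"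
      using eventually_conj[OF A B]
    proof (rule eventually_mono)
      fix n
      assume H: "(\<Sum>i<n. - W (X i w)) < real n * (- K + \<eta>) \<and> (\<Sum>i<n. D (X i w)) < real n * \<eta>"
      have "(\<Sum>i<n. ln (g (X i w))) = - (\<Sum>i<n. - W (X i w)) - (\<Sum>i<n. D (X i w))"
        by (simp add: WD sum_subtractf sum_negf)
      then show "(\<Sum>i<n. ln (g (X i w))) > real n * ((\<integral>x. ln (g x) * g x \<partial>lborel) - 2 * \<eta>)"
        using H by (simp add: K_def algebra_simps)
    qed
  qed
qed

lemma prob_interval_le:
  assumes c0: "\<And>x. g x \<le> c0" and lu: "lo \<le> hi"
  shows "(\<integral>x. g x * indicator {lo..hi} x \<partial>lborel) \<le> c0 * (hi - lo)"
proof -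
  have "(\<integral>x. g x * indicator {lo..hi} x \<partial>lborel) \<le> (\<integral>x. c0 * indicator {lo..hi} x \<partial>lborel)"
  proof (rule integral_mono)
    show "integrable lborel (\<lambda>x. g x * indicator {lo..hi} x)"
      by (rule Bochner_Integration.integrable_bound[OF g_integrable])
         (auto intro!: AE_I2 simp: indicator_def g_nonneg)
    show "integrable lborel (\<lambda>x::real. c0 * indicator {lo..hi} x)"
      by (intro integrable_mult_right integrable_real_indicator) (auto simp: emeasure_lborel_Icc_eq)
  qed (auto simp: indicator_def c0)
  also have "\<dots> = c0 * (hi - lo)" using lu by simp
  finally show ?thesis .
qed

lemma tail_small:
  assumes e: "e > 0"
  shows "\<exists>L::nat. (\<integral>x. g x * indicator {x. real L < \<bar>x\<bar>} x \<partial>lborel) < e"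
proof -
  define s where "s i x = g x * indicator {x. real i < \<bar>x\<bar>} x" for i :: nat and x :: real
  have [measurable]: "s i \<in> borel_measurable lborel" for i unfolding s_def by measurable
  have lim: "(\<lambda>i. integral\<^sup>L lborel (s i)) \<longlonglongrightarrow> integral\<^sup>L lborel (\<lambda>x::real. 0::real)"
  proof (rule integral_dominated_convergence[where w = g])
    show "integrable lborel g" by (rule g_integrable)
    show "AE x in lborel. (\<lambda>i. s i x) \<longlonglongrightarrow> 0"
    proof (intro AE_I2)
      fix x :: real
      have "eventually (\<lambda>i. s i x = 0) sequentially"
      proof -
        obtain N :: nat where "\<bar>x\<bar> \<le> real N" using real_arch_simple by blast
        then show ?thesis unfolding eventually_sequentially
          by (intro exI[of _ N]) (auto simp: s_def indicator_def)
      qed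
      then show "(\<lambda>i. s i x) \<longlonglongrightarrow> 0" by (rule tendsto_eventually)
    qed
    show "AE x in lborel. norm (s i x) \<le> g x" for i
      using g_nonneg by (auto simp: s_def indicator_def)
  qed auto
  then have "eventually (\<lambda>i. integral\<^sup>L lborel (s i) < e) sequentially"
    using e by (simp add: order_tendsto_iff)
  then obtain L where "integral\<^sup>L lborel (s L) < e" by (auto simp: eventually_sequentially)
  then show ?thesis unfolding s_def by blast
qed

lemma uniform_count:
  assumes c0: "\<And>x. g x \<le> c0" and r: "r > 0" and tau: "3 * c0 * r \<le> tau" "tau > 0"
  shows "AE w in M. eventually (\<lambda>n. \<forall>\<mu>. (\<Sum>i<n. if \<bar>X i w - \<mu>\<bar> < r then 1 else 0) \<le> real n * tau) sequentially"
proof -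
  define h where "h = r / 2"
  have h: "h > 0" using r by (simp add: h_def)
  define Wk where "Wk k = {real_of_int k * h - r .. real_of_int k * h + h + r}" for k :: int
  have pW: "(\<integral>x. g x * indicator (Wk k) x \<partial>lborel) \<le> 5 * tau / 6" for k
  proof -
    have "(\<integral>x. g x * indicator (Wk k) x \<partial>lborel) \<le> c0 * (2 * r + h)"
      unfolding Wk_def using prob_interval_le[OF c0, of "real_of_int k * h - r" "real_of_int k * h + h + r"] h r
      by (simp add: algebra_simps)
    also have "\<dots> = 5 / 2 * (c0 * r)" by (simp add: h_def algebra_simps)
    also have "\<dots> \<le> 5 * tau / 6" using tau by simp
    finally show ?thesis .
  qed
  obtain L :: nat where L: "(\<integral>x. g x * indicator {x. real L < \<bar>x\<bar>} x \<partial>lborel) < 5 * tau / 6"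
    using tail_small[of "5 * tau / 6"] tau by auto
  define eta where "eta = tau / 6"
  have eta: "eta > 0" using tau by (simp add: eta_def)
  define K :: int where "K = \<lceil>(real L + r) / h\<rceil> + 1"
  define ks where "ks = {- K .. K}"
  have fin: "finite ks" by (simp add: ks_def)
  have AEW: "AE w in M. \<forall>k\<in>ks. eventually (\<lambda>n. (\<Sum>i<n. indicator (Wk k) (X i w)) < real n * (5 * tau / 6 + eta)) sequentially"
    by (intro AE_finite_allI[OF fin] count_upper pW eta) (auto simp: Wk_def)
  have AET: "AE w in M. eventually (\<lambda>n. (\<Sum>i<n. indicator {x. real L < \<bar>x\<bar>} (X i w)) < real n * (5 * tau / 6 + eta)) sequentially"
    by (intro count_upper eta) (use L in auto)
  show ?thesis
  proof (rule AE_mp[OF AE_conjI[OF AEW AET]], intro AE_I2 impI, elim conjE)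
    fix w
    assume A: "\<forall>k\<in>ks. eventually (\<lambda>n. (\<Sum>i<n. indicator (Wk k) (X i w)) < real n * (5 * tau / 6 + eta)) sequentially"
      and B: "eventually (\<lambda>n. (\<Sum>i<n. indicator {x. real L < \<bar>x\<bar>} (X i w)) < real n * (5 * tau / 6 + eta)) sequentially"
    have te: "5 * tau / 6 + eta = tau" by (simp add: eta_def)
    show "eventually (\<lambda>n. \<forall>\<mu>. (\<Sum>i<n. if \<bar>X i w - \<mu>\<bar> < r then 1 else 0) \<le> real n * tau) sequentially"
      using eventually_conj[OF eventually_ball_finite[OF fin A] B]
    proof (rule eventually_mono, intro allI)
      fix n \<mu>
      assume H: "(\<forall>k\<in>ks. (\<Sum>i<n. indicator (Wk k) (X i w)) < real n * (5 * tau / 6 + eta)) \<and>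
              (\<Sum>i<n. indicator {x. real L < \<bar>x\<bar>} (X i w)) < real n * (5 * tau / 6 + eta)"
      show "(\<Sum>i<n. if \<bar>X i w - \<mu>\<bar> < r then 1 else 0) \<le> real n * tau"
      proof (cases "\<bar>\<mu>\<bar> \<le> real L + r")
        case True
        define k where "k = \<lfloor>\<mu> / h\<rfloor>"
        have k1: "real_of_int k * h \<le> \<mu>"
          using floor_divide_lower[OF h, of \<mu>] by (simp add: k_def)
        have k2: "\<mu> < real_of_int k * h + h"
          using floor_divide_upper[OF h, of \<mu>] by (simp add: k_def algebra_simps)
        have kk: "k \<in> ks"
        proof -
          have "\<mu> / h \<le> (real L + r) / h" using True h by (auto simp: divide_right_mono abs_le_iff)
          moreover have "- ((real L + r) / h) \<le> \<mu> / h"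
          proof -
            have "- (real L + r) \<le> \<mu>" using True by (auto simp: abs_le_iff)
            then have "(- (real L + r)) / h \<le> \<mu> / h" using h by (intro divide_right_mono) auto
            moreover have "(- (real L + r)) / h = - ((real L + r) / h)" by (rule minus_divide_left[symmetric])
            ultimately show ?thesis by linarith
          qed
          moreover have "(real L + r) / h \<le> real_of_int \<lceil>(real L + r) / h\<rceil>" by linarith
          moreover have "real_of_int \<lfloor>\<mu> / h\<rfloor> \<le> \<mu> / h" "\<mu> / h < real_of_int \<lfloor>\<mu> / h\<rfloor> + 1" by linarith+
          ultimately have "- (\<lceil>(real L + r) / h\<rceil> + 1) \<le> \<lfloor>\<mu> / h\<rfloor> \<and> \<lfloor>\<mu> / h\<rfloor> \<le> \<lceil>(real L + r) / h\<rceil> + 1"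
            by linarith
          then show ?thesis unfolding ks_def K_def k_def by simp
        qed
        have "(\<Sum>i<n. if \<bar>X i w - \<mu>\<bar> < r then 1 else 0::real) \<le> (\<Sum>i<n. indicator (Wk k) (X i w))"
          by (intro sum_mono) (use k1 k2 in \<open>auto simp: Wk_def indicator_def abs_less_iff\<close>)
        also have "\<dots> < real n * tau" using H kk te by auto
        finally show ?thesis by simp
      next
        case False
        have "(\<Sum>i<n. if \<bar>X i w - \<mu>\<bar> < r then 1 else 0::real) \<le> (\<Sum>i<n. indicator {x. real L < \<bar>x\<bar>} (X i w))"
          by (intro sum_mono) (use False in \<open>auto simp: indicator_def abs_less_iff\<close>)
        also have "\<dots> < real n * tau" using H te by auto
        finally show ?thesis by simp
      qed
    qed
  qed
qed

end

lemma powr_tail_finite: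
  assumes g: "gam > 1" and R: "R > 0"
  shows "(\<integral>\<^sup>+x. ennreal (indicator {x. R \<le> \<bar>x\<bar>} x * \<bar>x\<bar> powr (- gam)) \<partial>lborel) < \<infinity>"
proof -
  define f1 where "f1 x = indicator {R..} x * x powr (- gam)" for x :: real
  have [measurable]: "f1 \<in> borel_measurable borel" unfolding f1_def by measurable
  have hi: "((\<lambda>x. x powr (- gam)) has_integral - (R powr (- gam + 1)) / (- gam + 1)) {R..}"
    by (rule has_integral_powr_to_inf) (use g R in auto)
  have "(\<integral>\<^sup>+x. ennreal (indicator {R..} x * x powr (- gam)) \<partial>lborel) = ennreal (- (R powr (- gam + 1)) / (- gam + 1))"
    by (rule nn_integral_has_integral_lebesgue[OF _ hi]) simp
  then have f1fin: "(\<integral>\<^sup>+x. ennreal (f1 x) \<partial>lborel) < \<infinity>" by (simp add: f1_def)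
  have refl: "(\<integral>\<^sup>+x. ennreal (f1 (- x)) \<partial>lborel) = (\<integral>\<^sup>+x. ennreal (f1 x) \<partial>lborel)"
    using nn_integral_real_affine[of "\<lambda>x. ennreal (f1 x)" "-1" 0] by simp
  have "(\<integral>\<^sup>+x. ennreal (indicator {x. R \<le> \<bar>x\<bar>} x * \<bar>x\<bar> powr (- gam)) \<partial>lborel)
      = (\<integral>\<^sup>+x. ennreal (f1 x) + ennreal (f1 (- x)) \<partial>lborel)"
  proof (intro nn_integral_cong)
    fix x :: real
    show "ennreal (indicator {x. R \<le> \<bar>x\<bar>} x * \<bar>x\<bar> powr (- gam)) = ennreal (f1 x) + ennreal (f1 (- x))"
      using R by (cases "x \<ge> 0") (auto simp: f1_def indicator_def)
  qed
  also have "\<dots> = (\<integral>\<^sup>+x. ennreal (f1 x) \<partial>lborel) + (\<integral>\<^sup>+x. ennreal (f1 (- x)) \<partial>lborel)"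
    by (rule nn_integral_add) auto
  also have "\<dots> < \<infinity>" using f1fin refl by simp
  finally show ?thesis .
qed

lemma mix_dens_meas[measurable]:
  assumes [measurable]: "f0 \<in> borel_measurable borel"
  shows "mix_dens f0 m al mu s \<in> borel_measurable borel"
  unfolding mix_dens_def[abs_def] ls_dens_def by measurable

lemma mix_powr_finite:
  assumes f0n: "\<forall>x. f0 x \<ge> 0"
    and f0b: "\<forall>x. f0 x \<le> v0 \<and> (x \<noteq> 0 \<longrightarrow> f0 x \<le> v1 * \<bar>x\<bar> powr (- beta))"
    and v0: "v0 > 0" and v1: "v1 > 0" and beta: "beta > 1"
    and va: "valid_mix m al" and s: "s > 0" and a: "a > 0" "beta * a > 1"
    and [measurable]: "f0 \<in> borel_measurable borel"
  shows "(\<integral>\<^sup>+x. ennreal (mix_dens f0 m al mu s x powr a) \<partial>lborel) < \<infinity>"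
proof -
  define g where "g = mix_dens f0 m al mu s"
  have [measurable]: "g \<in> borel_measurable borel" unfolding g_def by measurable
  have g0: "g x \<ge> 0" for x using mix_dens_nonneg[OF _ s va] f0n by (simp add: g_def)
  define S where "S = (\<Sum>j<m. \<bar>mu j\<bar>)"
  have S0: "S \<ge> 0" by (simp add: S_def sum_nonneg)
  define R where "R = 2 * S + 1"
  have R0: "R > 0" using S0 by (simp add: R_def)
  define c0 where "c0 = v0 / s"
  define C0 where "C0 = v1 * s powr (beta - 1)"
  have C0: "C0 > 0" using v1 s by (simp add: C0_def)
  define ga where "ga = beta * a"
  define G where "G x = c0 powr a * indicator {x. \<bar>x\<bar> < R} x
     + (C0 powr a * 2 powr ga) * (indicator {x. R \<le> \<bar>x\<bar>} x * \<bar>x\<bar> powr (- ga))" for x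
  have pt: "g x powr a \<le> G x" for x
  proof (cases "\<bar>x\<bar> < R")
    case True
    have "g x \<le> c0" unfolding g_def c0_def
      using s f0b by (intro mix_dens_bound[OF va] ls_dens_le_v0) auto
    then have "g x powr a \<le> c0 powr a" using g0[of x] a by (intro powr_mono2) auto
    then show ?thesis using True R0 by (simp add: G_def indicator_def)
  next
    case False
    then have xR: "R \<le> \<bar>x\<bar>" by simp
    have xpos: "\<bar>x\<bar> / 2 > 0" using xR R0 by simp
    have "ls_dens f0 (mu j) s x \<le> v1 * s powr (beta - 1) * (\<bar>x\<bar> / 2) powr (- beta)" if j: "j < m" for j
    proof (rule ls_dens_tail)
      have "\<bar>mu j\<bar> \<le> S" unfolding S_def using j by (intro member_le_sum) auto
      moreover have "\<bar>x\<bar> - \<bar>mu j\<bar> \<le> \<bar>x - mu j\<bar>" by (rule abs_triangle_ineq2)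
      ultimately show "\<bar>x - mu j\<bar> \<ge> \<bar>x\<bar> / 2" using xR by (simp add: R_def)
    qed (use f0b s xpos v1 beta in auto)
    then have "g x \<le> C0 * (\<bar>x\<bar> / 2) powr (- beta)" unfolding g_def C0_def
      by (intro mix_dens_bound[OF va])
    then have "g x powr a \<le> (C0 * (\<bar>x\<bar> / 2) powr (- beta)) powr a"
      using g0[of x] a by (intro powr_mono2) auto
    also have "\<dots> = C0 powr a * (\<bar>x\<bar> / 2) powr (- ga)"
      using C0 xpos by (simp add: powr_mult powr_powr ga_def)
    also have "(\<bar>x\<bar> / 2) powr (- ga) = 2 powr ga * \<bar>x\<bar> powr (- ga)"
      using xpos by (simp add: powr_divide powr_minus field_simps)
    finally show ?thesis using xR R0 by (simp add: G_def indicator_def mult.assoc)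
  qed
  have "(\<integral>\<^sup>+x. ennreal (g x powr a) \<partial>lborel) \<le> (\<integral>\<^sup>+x. ennreal (G x) \<partial>lborel)"
    using pt by (intro nn_integral_mono) (simp add: ennreal_leI)
  also have "\<dots> = (\<integral>\<^sup>+x. ennreal (c0 powr a) * indicator {x. \<bar>x\<bar> < R} x
      + ennreal (C0 powr a * 2 powr ga) * ennreal (indicator {x. R \<le> \<bar>x\<bar>} x * \<bar>x\<bar> powr (- ga)) \<partial>lborel)"
    by (intro nn_integral_cong)
       (simp add: G_def ennreal_plus[symmetric] ennreal_mult[symmetric] indicator_def del: ennreal_plus)
  also have "\<dots> = ennreal (c0 powr a) * emeasure lborel {x. \<bar>x\<bar> < R}
      + ennreal (C0 powr a * 2 powr ga) * (\<integral>\<^sup>+x. ennreal (indicator {x. R \<le> \<bar>x\<bar>} x * \<bar>x\<bar> powr (- ga)) \<partial>lborel)"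
    by (subst nn_integral_add) (auto simp: nn_integral_cmult)
  also have "\<dots> < \<infinity>"
  proof -
    have "{x::real. \<bar>x\<bar> < R} = {-R<..<R}" by auto
    then have e: "emeasure lborel {x::real. \<bar>x\<bar> < R} < \<infinity>" using R0 by simp
    have t: "(\<integral>\<^sup>+x. ennreal (indicator {x. R \<le> \<bar>x\<bar>} x * \<bar>x\<bar> powr (- ga)) \<partial>lborel) < \<infinity>"
      by (rule powr_tail_finite) (use a R0 in \<open>auto simp: ga_def\<close>)
    show ?thesis using e t by (simp add: ennreal_mult_less_top)
  qed
  finally show ?thesis by (simp add: g_def)
qed

lemma final_tendsto:
  fixes F G :: "nat \<Rightarrow> ereal"
  assumes F: "eventually (\<lambda>n. F n \<le> ereal (real n * (K - 1))) sequentially"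
    and G: "eventually (\<lambda>n. G n = ereal (S n) \<and> S n > real n * (K - 1/2)) sequentially"
  shows "(\<lambda>n. F n - G n) \<longlonglongrightarrow> -\<infinity>"
  unfolding tendsto_MInfty
proof
  fix r :: real
  obtain N :: nat where N: "real N > - 2 * r" using reals_Archimedean2 by blast
  have "eventually (\<lambda>n. n \<ge> N) sequentially" by (rule eventually_ge_at_top)
  then show "eventually (\<lambda>n. F n - G n < ereal r) sequentially"
    using eventually_conj[OF F G]
  proof (eventually_elim)
    case (elim n)
    then have "F n - G n \<le> ereal (real n * (K - 1)) - ereal (S n)"
      by (intro ereal_minus_mono) auto
    also have "\<dots> = ereal (real n * (K - 1) - S n)" by simp
    also have "\<dots> < ereal r"
    proof -
      have "real n \<ge> real N" using elim by simp
      then show ?thesis using elim N by (simp add: algebra_simps)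
    qed
    finally show ?case .
  qed
qed

theorem lemma2:
  fixes M :: "'w measure" and X :: "nat \<Rightarrow> 'w \<Rightarrow> real"
    and f0 :: "real \<Rightarrow> real" and m :: nat
    and alpha0 mu0 :: "nat \<Rightarrow> real" and sigma0 :: real
    and v0 v1 beta eps :: real
  defines "g0 \<equiv> mix_dens f0 m alpha0 mu0 sigma0"
  defines "K0 \<equiv> integral\<^sup>L lborel (\<lambda>x. ln (g0 x) * g0 x)"
  defines "Delta \<equiv> v0 / exp (K0 - 1)"
  defines "a \<equiv> (1 + beta) / (2 * beta)"
  defines "b \<equiv> 2 * (beta + 1) / (beta - 1)"
  defines "eps0 \<equiv> (3 * real m * b * v0 / sigma0) powr (- 1 / (1 - a))"
  assumes "prob_space M"
    and "m > 0"
    \<comment> \<open>f(.;0,1) is a probability density on the reals\<close>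
    and f0_nonneg: "\<forall>x. f0 x \<ge> 0"
    and f0_int: "integrable lborel f0" "integral\<^sup>L lborel f0 = 1"
    \<comment> \<open>true parameter\<close>
    and "valid_mix m alpha0" and "sigma0 > 0"
    \<comment> \<open>i.i.d. sample with density g(.;Psi0,sigma0)\<close>
    and "prob_space.indep_vars M (\<lambda>_. borel) X UNIV"
    and "\<forall>i. distributed M lborel (X i) (\<lambda>x. ennreal (g0 x))"
    \<comment> \<open>C1 -- C4\<close>
    and C1: "cond_C1 f0 m"
    and C2: "integrable lborel (\<lambda>x. \<bar>ln (g0 x)\<bar> * g0 x)"
    and C3: "v0 > 0" "v1 > 0" "beta > 1"
       "\<forall>x. f0 x \<le> v0 \<and> (x \<noteq> 0 \<longrightarrow> f0 x \<le> v1 * \<bar>x\<bar> powr (- beta))"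
    and C4: "continuous_on UNIV f0"
    \<comment> \<open>choice of epsilon\<close>
    and "eps > 0"
    and D1: "eps \<le> eps0"
    and D2: "eps \<le> (v1 / v0) powr (- 2 / (beta + 1))"
    and D3: "ln v0 / b + (1 - 1 / b) * ln v1 + (beta - 1) / 4 * ln eps \<le> K0 - 1"
  shows "AE w in M.
      ((\<lambda>n. (SUP p \<in> {(al, mu, s). valid_mix m al \<and> s \<ge> Delta}.
                 loglik f0 m (fst p) (fst (snd p)) (snd (snd p)) X n w)
             - loglik f0 m alpha0 mu0 sigma0 X n w) \<longlonglongrightarrow> -\<infinity>)
    \<and> ((\<lambda>n. (SUP p \<in> {(al, mu, s). valid_mix m al \<and> 0 < s \<and> s \<le> eps}.
                 loglik f0 m (fst p) (fst (snd p)) (snd (snd p)) X n w)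
             - loglik f0 m alpha0 mu0 sigma0 X n w) \<longlonglongrightarrow> -\<infinity>)"
proof -
  have PS: "prob_space M" using assms by blast
  interpret P: prob_space M by (fact PS)
  have f0m[measurable]: "f0 \<in> borel_measurable borel"
    using C4 by (rule borel_measurable_continuous_onI)
  have va0: "valid_mix m alpha0" and s0: "sigma0 > 0" using assms by auto
  have ind: "P.indep_vars (\<lambda>_. borel) X UNIV" using assms by auto
  have dist: "\<And>i. distributed M lborel (X i) (\<lambda>x. ennreal (g0 x))" using assms by auto
  have v0: "v0 > 0" and v1: "v1 > 0" and beta: "beta > 1" using C3 by auto
  have f0b: "\<forall>x. f0 x \<le> v0 \<and> (x \<noteq> 0 \<longrightarrow> f0 x \<le> v1 * \<bar>x\<bar> powr (- beta))" using C3 by auto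
  have m0: "m > 0" using assms by auto
  have g0n: "g0 x \<ge> 0" for x unfolding g0_def using mix_dens_nonneg[OF _ s0 va0] f0_nonneg by simp
  interpret I: iid_dens M X g0
    by unfold_locales (use ind dist g0n in auto)
  define c0 where "c0 = v0 / sigma0"
  have c0: "g0 x \<le> c0" for x unfolding g0_def c0_def
    using s0 f0b by (intro mix_dens_bound[OF va0] ls_dens_le_v0) auto
  have c0p: "c0 > 0" using v0 s0 by (simp add: c0_def)
  have a0: "a > 0" and a1: "a < 1" and ba: "beta * a > 1"
    using beta by (auto simp: a_def field_simps)
  have b0: "b > 0" using beta by (simp add: b_def)
  have I1: "(\<integral>\<^sup>+x. ennreal (g0 x powr a) \<partial>lborel) < \<infinity>"
    unfolding g0_def
    by (rule mix_powr_finite[OF f0_nonneg f0b v0 v1 beta va0 s0 a0 ba f0m])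
  have Kint: "integrable lborel (\<lambda>x. ln (g0 x) * g0 x)"
  proof (rule Bochner_Integration.integrable_bound[OF C2])
    show "(\<lambda>x. ln (g0 x) * g0 x) \<in> borel_measurable lborel"
      unfolding g0_def by measurable
    show "AE x in lborel. norm (ln (g0 x) * g0 x) \<le> norm (\<bar>ln (g0 x)\<bar> * g0 x)"
      by (auto simp: abs_mult)
  qed
  have AE1: "AE w in M. eventually (\<lambda>n. (\<Sum>i<n. ln (g0 (X i w))) > real n * (K0 - 2 * (1/4))) sequentially"
    unfolding K0_def by (rule I.loglik_lower[OF c0 c0p a0 a1 I1 Kint]) simp
  have AE2: "AE w in M. \<forall>i. g0 (X i w) > 0" by (rule I.AE_pos)
  define r where "r = eps powr (1 - a)"
  have r0: "r > 0" using assms by (simp add: r_def)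
  define tau where "tau = 1 / (real m * b)"
  have tau0: "tau > 0" using m0 b0 by (simp add: tau_def)
  have rb: "3 * c0 * r \<le> tau"
  proof -
    have "r \<le> eps0 powr (1 - a)" unfolding r_def using D1 assms a1 by (intro powr_mono2) auto
    also have "eps0 powr (1 - a) = (3 * real m * b * v0 / sigma0) powr (- 1)"
      unfolding eps0_def using a1 by (simp add: powr_powr)
    also have "\<dots> = sigma0 / (3 * real m * b * v0)"
      using m0 b0 v0 s0 by (simp add: powr_minus_divide)
    finally have "r \<le> sigma0 / (3 * real m * b * v0)" .
    then have "3 * c0 * r \<le> 3 * c0 * (sigma0 / (3 * real m * b * v0))"
      using c0p by (intro mult_left_mono) auto
    also have "\<dots> = tau" using s0 v0 by (simp add: c0_def tau_def field_simps)
    finally show ?thesis .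
  qed
  have AE3: "AE w in M. eventually (\<lambda>n. \<forall>\<mu>. (\<Sum>i<n. if \<bar>X i w - \<mu>\<bar> < r then 1 else 0) \<le> real n * tau) sequentially"
    by (rule I.uniform_count[OF c0 r0 rb tau0])
  show ?thesis
  proof (rule AE_mp[OF AE_conjI[OF AE1 AE_conjI[OF AE2 AE3]]], intro AE_I2 impI, elim conjE)
    fix w
    assume H1: "eventually (\<lambda>n. (\<Sum>i<n. ln (g0 (X i w))) > real n * (K0 - 2 * (1/4))) sequentially"
      and H2: "\<forall>i. g0 (X i w) > 0"
      and H3: "eventually (\<lambda>n. \<forall>\<mu>. (\<Sum>i<n. if \<bar>X i w - \<mu>\<bar> < r then 1 else 0) \<le> real n * tau) sequentially"
    have G: "eventually (\<lambda>n. loglik f0 m alpha0 mu0 sigma0 X n w = ereal (\<Sum>i<n. ln (g0 (X i w)))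
        \<and> (\<Sum>i<n. ln (g0 (X i w))) > real n * (K0 - 1/2)) sequentially"
      using H1
    proof (rule eventually_mono)
      fix n assume "(\<Sum>i<n. ln (g0 (X i w))) > real n * (K0 - 2 * (1/4))"
      moreover have "loglik f0 m alpha0 mu0 sigma0 X n w = ereal (\<Sum>i<n. ln (g0 (X i w)))"
        unfolding loglik_def g0_def[symmetric] using H2 by (simp add: eln_def)
      ultimately show "loglik f0 m alpha0 mu0 sigma0 X n w = ereal (\<Sum>i<n. ln (g0 (X i w)))
        \<and> (\<Sum>i<n. ln (g0 (X i w))) > real n * (K0 - 1/2)" by simp
    qed
    have F1: "eventually (\<lambda>n. (SUP p \<in> {(al, mu, s). valid_mix m al \<and> s \<ge> Delta}.
                 loglik f0 m (fst p) (fst (snd p)) (snd (snd p)) X n w) \<le> ereal (real n * (K0 - 1))) sequentially"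
    proof (intro always_eventually allI SUP_least)
      fix n and p :: "(nat \<Rightarrow> real) \<times> (nat \<Rightarrow> real) \<times> real" assume "p \<in> {(al, mu, s). valid_mix m al \<and> s \<ge> Delta}"
      then obtain al mu s where p: "p = (al, mu, s)" and va: "valid_mix m al" and sD: "s \<ge> Delta"
        by auto
      have Dp: "Delta > 0" using v0 by (simp add: Delta_def)
      have eq: "v0 / Delta = exp (K0 - 1)" using v0 by (simp add: Delta_def)
      have f0v0: "\<forall>x. f0 x \<le> v0" using f0b by blast
      have "(\<Sum>i<n. eln (mix_dens f0 m al mu s (X i w))) \<le> ereal (real n * (K0 - 1))"
        by (rule big_sigma_bound[OF f0v0 v0 va Dp sD]) (use eq in simp)
      then show "loglik f0 m (fst p) (fst (snd p)) (snd (snd p)) X n w \<le> ereal (real n * (K0 - 1))"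
        by (simp add: p loglik_def)
    qed
    have F2: "eventually (\<lambda>n. (SUP p \<in> {(al, mu, s). valid_mix m al \<and> 0 < s \<and> s \<le> eps}.
                 loglik f0 m (fst p) (fst (snd p)) (snd (snd p)) X n w) \<le> ereal (real n * (K0 - 1))) sequentially"
      using H3
    proof (rule eventually_mono, intro SUP_least)
      fix n and p :: "(nat \<Rightarrow> real) \<times> (nat \<Rightarrow> real) \<times> real"
      assume cntH: "\<forall>\<mu>. (\<Sum>i<n. if \<bar>X i w - \<mu>\<bar> < r then 1 else 0) \<le> real n * tau"
      assume "p \<in> {(al, mu, s). valid_mix m al \<and> 0 < s \<and> s \<le> eps}"
      then obtain al mu s where p: "p = (al, mu, s)" and va: "valid_mix m al" and s: "0 < s" "s \<le> eps"
        by auto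
      have lns: "ln s \<le> ln eps" using s by simp
      have AB: "ln v1 + (beta - 1) / 2 * ln s \<le> ln v0 - ln s"
      proof -
        have "s \<le> (v1 / v0) powr (- 2 / (beta + 1))" using s D2 by linarith
        then have "ln s \<le> ln ((v1 / v0) powr (- 2 / (beta + 1)))"
          using s v0 v1 by (subst ln_le_cancel_iff) auto
        also have "\<dots> = - 2 / (beta + 1) * (ln v1 - ln v0)"
          using v0 v1 by (simp add: ln_powr ln_div)
        finally have "ln s \<le> - 2 / (beta + 1) * (ln v1 - ln v0)" .
        then have "(beta + 1) / 2 * ln s \<le> (beta + 1) / 2 * (- 2 / (beta + 1) * (ln v1 - ln v0))"
          using beta by (intro mult_left_mono) auto
        also have "\<dots> = ln v0 - ln v1" using beta by (simp add: field_simps)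
        finally show ?thesis by (simp add: field_simps)
      qed
      have cnt: "(\<Sum>i<n. if (\<exists>j<m. \<bar>X i w - mu j\<bar> < s powr (1 - a)) then 1 else 0) \<le> real n / b"
      proof -
        have sr: "s powr (1 - a) \<le> r" unfolding r_def using s a1 by (intro powr_mono2) auto
        have "(\<Sum>i<n. if (\<exists>j<m. \<bar>X i w - mu j\<bar> < s powr (1 - a)) then 1 else 0)
            \<le> (\<Sum>i<n. \<Sum>j<m. if \<bar>X i w - mu j\<bar> < r then 1 else (0::real))"
        proof (intro sum_mono)
          fix i
          show "(if (\<exists>j<m. \<bar>X i w - mu j\<bar> < s powr (1 - a)) then 1 else 0)
              \<le> (\<Sum>j<m. if \<bar>X i w - mu j\<bar> < r then 1 else (0::real))"
          proof (cases "\<exists>j<m. \<bar>X i w - mu j\<bar> < s powr (1 - a)")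
            case True
            then obtain j where j: "j < m" "\<bar>X i w - mu j\<bar> < r" using sr by force
            have "(if \<bar>X i w - mu j\<bar> < r then 1 else (0::real)) \<le> (\<Sum>j<m. if \<bar>X i w - mu j\<bar> < r then 1 else (0::real))"
              using j by (intro member_le_sum) auto
            then show ?thesis using True j by simp
          qed (auto intro: sum_nonneg)
        qed
        also have "\<dots> = (\<Sum>j<m. \<Sum>i<n. if \<bar>X i w - mu j\<bar> < r then 1 else (0::real))"
          by (rule sum.swap)
        also have "\<dots> \<le> (\<Sum>j<m. real n * tau)"
          using cntH by (intro sum_mono) auto
        also have "\<dots> = real n / b" using m0 b0 by (simp add: tau_def)
        finally show ?thesis .
      qed
      have "(\<Sum>i<n. eln (mix_dens f0 m al mu s (X i w)))
          \<le> ereal (real n * (ln v0 / b + (1 - 1 / b) * ln v1 + (beta - 1) / 4 * ln s))"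
        by (rule small_sigma_bound[OF f0b v0 v1 beta va s(1) meta_eq_to_obj_eq[OF a_def] meta_eq_to_obj_eq[OF b_def] AB cnt])
      also have "real n * (ln v0 / b + (1 - 1 / b) * ln v1 + (beta - 1) / 4 * ln s) \<le> real n * (K0 - 1)"
      proof (intro mult_left_mono)
        have "(beta - 1) / 4 * ln s \<le> (beta - 1) / 4 * ln eps"
          using lns beta by (intro mult_left_mono) auto
        then show "ln v0 / b + (1 - 1 / b) * ln v1 + (beta - 1) / 4 * ln s \<le> K0 - 1"
          using D3 by linarith
      qed simp
      finally show "loglik f0 m (fst p) (fst (snd p)) (snd (snd p)) X n w \<le> ereal (real n * (K0 - 1))"
        unfolding p loglik_def by simp
    qed
    show "((\<lambda>n. (SUP p \<in> {(al, mu, s). valid_mix m al \<and> s \<ge> Delta}.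
                 loglik f0 m (fst p) (fst (snd p)) (snd (snd p)) X n w)
             - loglik f0 m alpha0 mu0 sigma0 X n w) \<longlonglongrightarrow> -\<infinity>)
        \<and> ((\<lambda>n. (SUP p \<in> {(al, mu, s). valid_mix m al \<and> 0 < s \<and> s \<le> eps}.
                 loglik f0 m (fst p) (fst (snd p)) (snd (snd p)) X n w)
             - loglik f0 m alpha0 mu0 sigma0 X n w) \<longlonglongrightarrow> -\<infinity>)"
      using final_tendsto[OF F1 G] final_tendsto[OF F2 G] by simp
  qed
qed

end
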